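(* Let $n$ be a positive integer such that $0.2n$, $0.45n$, $0.35n$ are integers. Consider the population of $n$ users consisting of $0.2n$ users with speech point $2$ and interval $[2,4]$, $0.45n$ users with speech point $3$ and interval $[2,3]$, and $0.35n$ users with speech point $4$ and interval $[3,4]$, all with participation threshold $\theta_i=2/3$, and no moderation window (no user banned). Then there is no stable set of users: for every $\mathcal S\subseteq[n]$, either some $i\in\mathcal S$ has negative utility with respect to $\mathcal S$ or some $j\notin\mathcal S$ has nonnegative utility with respect to $\mathcal S$.
   Context: For a set $\mathcal S$ of users on the platform, user $i$ (with interval $[l_i,r_i]$ and threshold $\theta_i$) has nonnegative utility with respect to $\mathcal S$ iff $|\{j\in\mathcal S\setminus\{i\}:p_j\in[l_i,r_i]\}|\ge\theta_i|\mathcal S\setminus\{i\}|$ (in particular utility is nonnegative when $\mathcal S\setminus\{i\}=\emptyset$), and negative otherwise. A set $\mathcal S$ is stable if all $i\in\mathcal S$ have nonnegative utility with respect to $\mathcal S$ and all $j\notin\mathcal S$ have negative utility with respect to $\mathcal S$. *)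

theory Defs
  imports Complex_Main
begin

text \<open>Users are indexed by 0..<n (representing [n]). User i has speech point p i,
  interval [l i, r i] and threshold th i.\<close>

definition nonneg_utility ::
  "(nat \<Rightarrow> real) \<Rightarrow> (nat \<Rightarrow> real) \<Rightarrow> (nat \<Rightarrow> real) \<Rightarrow> (nat \<Rightarrow> real) \<Rightarrow> nat set \<Rightarrow> nat \<Rightarrow> bool" where
  "nonneg_utility p l r th S i \<longleftrightarrow>
     real (card {j \<in> S - {i}. l i \<le> p j \<and> p j \<le> r i}) \<ge> th i * real (card (S - {i}))"

definition stable ::
  "nat \<Rightarrow> (nat \<Rightarrow> real) \<Rightarrow> (nat \<Rightarrow> real) \<Rightarrow> (nat \<Rightarrow> real) \<Rightarrow> (nat \<Rightarrow> real) \<Rightarrow> nat set \<Rightarrow> bool" where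
  "stable n p l r th S \<longleftrightarrow> S \<subseteq> {0..<n} \<and>
     (\<forall>i\<in>S. nonneg_utility p l r th S i) \<and>
     (\<forall>j\<in>{0..<n} - S. \<not> nonneg_utility p l r th S j)"

end

theory Submission
  imports Defs
begin

theorem proposition12:
  fixes n a b c :: nat and p l r th :: "nat \<Rightarrow> real"
  assumes "n > 0"
    and "real a = 0.2 * real n" and "real b = 0.45 * real n" and "real c = 0.35 * real n"
    and "\<And>i. i < a \<Longrightarrow> p i = 2 \<and> l i = 2 \<and> r i = 4"
    and "\<And>i. a \<le> i \<Longrightarrow> i < a + b \<Longrightarrow> p i = 3 \<and> l i = 2 \<and> r i = 3"
    and "\<And>i. a + b \<le> i \<Longrightarrow> i < n \<Longrightarrow> p i = 4 \<and> l i = 3 \<and> r i = 4"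
    and "\<And>i. i < n \<Longrightarrow> th i = 2 / 3"
  shows "\<forall>S. S \<subseteq> {0..<n} \<longrightarrow>
           (\<exists>i\<in>S. \<not> nonneg_utility p l r th S i) \<or>
           (\<exists>j\<in>{0..<n} - S. nonneg_utility p l r th S j)"
proof (intro allI impI, rule ccontr)
  fix S assume S: "S \<subseteq> {0..<n}"
    and "\<not> ((\<exists>i\<in>S. \<not> nonneg_utility p l r th S i) \<or>
           (\<exists>j\<in>{0..<n} - S. nonneg_utility p l r th S j))"
  then have H1: "\<And>i. i \<in> S \<Longrightarrow> nonneg_utility p l r th S i"
    and H2: "\<And>j. j < n \<Longrightarrow> j \<notin> S \<Longrightarrow> \<not> nonneg_utility p l r th S j" by auto
  have fin: "finite S" using S finite_subset by blast
  have rr: "real a = real n / 5" "real b = 9 * real n / 20" "real c = 7 * real n / 20"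
    using assms(2-4) by simp_all
  have "real (a + b + c) = real n" using rr by simp
  then have nabc: "n = a + b + c" using of_nat_eq_iff by metis
  have ap: "a > 0" using assms(1) rr by simp
  have bp: "b > 0" using assms(1) rr by simp
  have Sn: "\<And>j. j \<in> S \<Longrightarrow> j < n" using S by auto
  have pS: "\<And>j. j \<in> S \<Longrightarrow> (j < a \<and> p j = 2) \<or> (a \<le> j \<and> j < a + b \<and> p j = 3) \<or> (a + b \<le> j \<and> p j = 4)"
    using assms(5-7) Sn by (metis not_le)
  define X where "X = S \<inter> {..<a}"
  define Y where "Y = S \<inter> {a..<a+b}"
  define Z where "Z = S \<inter> {a+b..}"
  define x where "x = card X"
  define y where "y = card Y"
  define z where "z = card Z"
  have fX: "finite X" "finite Y" "finite Z" using fin X_def Y_def Z_def by auto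
  have SU: "S = X \<union> Y \<union> Z" unfolding X_def Y_def Z_def by auto
  have cS: "card S = x + y + z" unfolding SU x_def y_def z_def
    by (subst card_Un_disjoint, use fX in auto, simp_all add: X_def Y_def Z_def card_Un_disjoint fX)
       (subst card_Un_disjoint, use fX in auto)
  have cAB: "card (X \<union> Y) = x + y" unfolding x_def y_def
    by (rule card_Un_disjoint, use fX in auto, auto simp: X_def Y_def)
  have cBC: "card (Y \<union> Z) = y + z" unfolding z_def y_def
    by (rule card_Un_disjoint, use fX in auto, auto simp: Z_def Y_def)
  have yb: "y \<le> b" unfolding y_def Y_def
    by (metis card_atLeastLessThan card_mono diff_add_inverse finite_atLeastLessThan inf_le2)
  have zc: "z \<le> c"
  proof -
    have "Z \<subseteq> {a+b..<n}" using Z_def S by auto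
    then show ?thesis unfolding z_def using nabc
      by (metis add_diff_cancel_left' card_atLeastLessThan card_mono finite_atLeastLessThan)
  qed
  have allA: "{..<a} \<subseteq> S"
  proof
    fix i assume i: "i \<in> {..<a}"
    have iA: "i < n" using i nabc by auto
    have lr: "l i = 2" "r i = 4" using assms(5) i by auto
    have "{j \<in> S - {i}. l i \<le> p j \<and> p j \<le> r i} = S - {i}"
      using pS lr by fastforce
    then have "nonneg_utility p l r th S i" unfolding nonneg_utility_def assms(8)[OF iA] by simp
    then show "i \<in> S" using H2 iA by blast
  qed
  have xa: "x = a"
  proof -
    have "X = {..<a}" using allA X_def by auto
    then show ?thesis using x_def by simp
  qed
  have setB: "{j \<in> S - {i}. l i \<le> p j \<and> p j \<le> r i} = (X \<union> Y) - {i}"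
    if "a \<le> i" "i < a + b" for i
  proof -
    have lr: "l i = 2" "r i = 3" using assms(6) that by auto
    have q: "j \<in> S \<Longrightarrow> (2 \<le> p j \<and> p j \<le> 3) \<longleftrightarrow> j < a + b" for j
      using pS[of j] by auto
    have "{j \<in> S - {i}. 2 \<le> p j \<and> p j \<le> 3} = {j \<in> S - {i}. j < a + b}"
      using q by blast
    also have "\<dots> = (X \<union> Y) - {i}" unfolding X_def Y_def by auto
    finally show ?thesis unfolding lr .
  qed
  have setC: "{j \<in> S - {i}. l i \<le> p j \<and> p j \<le> r i} = (Y \<union> Z) - {i}"
    if "a + b \<le> i" "i < n" for i
  proof -
    have lr: "l i = 3" "r i = 4" using assms(7) that by auto
    have q: "j \<in> S \<Longrightarrow> (3 \<le> p j \<and> p j \<le> 4) \<longleftrightarrow> a \<le> j" for j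
      using pS[of j] by auto
    have "{j \<in> S - {i}. 3 \<le> p j \<and> p j \<le> 4} = {j \<in> S - {i}. a \<le> j}"
      using q by blast
    also have "\<dots> = (Y \<union> Z) - {i}" unfolding Z_def Y_def by auto
    finally show ?thesis unfolding lr .
  qed
  have B1: "3 * (real x + real y - 1) \<ge> 2 * (real x + real y + real z - 1)" if "y > 0"
  proof -
    have "Y \<noteq> {}" using that unfolding y_def by auto
    then obtain i where i: "i \<in> Y" by blast
    have ii: "a \<le> i" "i < a + b" "i \<in> S" using i unfolding Y_def by auto
    have th: "th i = 2/3" using assms(8) Sn[OF ii(3)] by blast
    have "real (card ((X \<union> Y) - {i})) \<ge> th i * real (card (S - {i}))"
      using H1[OF ii(3)] unfolding nonneg_utility_def setB[OF ii(1,2)] .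
    moreover have "card ((X \<union> Y) - {i}) = card (X \<union> Y) - 1"
      using i by (intro card_Diff_singleton) auto
    moreover have "card (S - {i}) = card S - 1" using ii(3) by (intro card_Diff_singleton)
    moreover have "x + y \<ge> 1" using that by linarith
    ultimately have F: "real (x + y - 1) \<ge> 2/3 * real (x + y + z - 1)"
      unfolding th cAB cS by simp
    have e1: "real (x + y - 1) = real x + real y - 1" using \<open>x + y \<ge> 1\<close> by (simp add: of_nat_diff)
    have e2: "real (x + y + z - 1) = real x + real y + real z - 1" using \<open>x + y \<ge> 1\<close> by (simp add: of_nat_diff)
    show ?thesis using F unfolding e1 e2 by (simp add: field_simps)
  qed
  have B2: "3 * (real x + real y) < 2 * (real x + real y + real z)" if "y < b"
  proof -
    have "\<not> {a..<a+b} \<subseteq> Y" using that card_mono[OF fX(2)] unfolding y_def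
      by (metis card_atLeastLessThan diff_add_inverse leD)
    then obtain i where i: "a \<le> i" "i < a + b" "i \<notin> S" unfolding Y_def by (metis IntI atLeastLessThan_iff subsetI)
    have in_: "i < n" using i nabc by linarith
    have th: "th i = 2/3" using assms(8) in_ by blast
    have "\<not> real (card ((X \<union> Y) - {i})) \<ge> th i * real (card (S - {i}))"
      using H2[OF in_ i(3)] unfolding nonneg_utility_def setB[OF i(1,2)] .
    moreover have "(X \<union> Y) - {i} = X \<union> Y" using i unfolding X_def Y_def by auto
    moreover have "S - {i} = S" using i by auto
    ultimately show ?thesis unfolding th using cAB cS by simp
  qed
  have C1: "3 * (real y + real z - 1) \<ge> 2 * (real x + real y + real z - 1)" if "z > 0"
  proof -
    have "Z \<noteq> {}" using that unfolding z_def by auto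
    then obtain i where i: "i \<in> Z" by blast
    have ii: "a + b \<le> i" "i \<in> S" using i unfolding Z_def by auto
    have iin: "i < n" using Sn[OF ii(2)] .
    have th: "th i = 2/3" using assms(8) iin by blast
    have "real (card ((Y \<union> Z) - {i})) \<ge> th i * real (card (S - {i}))"
      using H1[OF ii(2)] unfolding nonneg_utility_def setC[OF ii(1) iin] .
    moreover have "card ((Y \<union> Z) - {i}) = card (Y \<union> Z) - 1"
      using i by (intro card_Diff_singleton) auto
    moreover have "card (S - {i}) = card S - 1" using ii(2) by (intro card_Diff_singleton)
    moreover have "y + z \<ge> 1" using that by linarith
    ultimately have F: "real (y + z - 1) \<ge> 2/3 * real (x + y + z - 1)"
      unfolding th cBC cS by simp
    have e1: "real (y + z - 1) = real y + real z - 1" using \<open>y + z \<ge> 1\<close> by (simp add: of_nat_diff)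
    have e2: "real (x + y + z - 1) = real x + real y + real z - 1" using \<open>y + z \<ge> 1\<close> by (simp add: of_nat_diff)
    show ?thesis using F unfolding e1 e2 by (simp add: field_simps)
  qed
  have C2: "3 * (real y + real z) < 2 * (real x + real y + real z)" if "z < c"
  proof -
    have Zs: "Z \<subseteq> {a+b..<n}" using S unfolding Z_def by auto
    have "\<not> {a+b..<n} \<subseteq> Z" using that card_mono[OF fX(3)] nabc unfolding z_def
      by (metis card_atLeastLessThan diff_add_inverse leD)
    then obtain i where i: "a + b \<le> i" "i < n" "i \<notin> S" unfolding Z_def by (metis IntI atLeastLessThan_iff atLeast_iff subsetI)
    have th: "th i = 2/3" using assms(8) i(2) by blast
    have "\<not> real (card ((Y \<union> Z) - {i})) \<ge> th i * real (card (S - {i}))"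
      using H2[OF i(2,3)] unfolding nonneg_utility_def setC[OF i(1,2)] .
    moreover have "(Y \<union> Z) - {i} = Y \<union> Z" using i unfolding Z_def Y_def by auto
    moreover have "S - {i} = S" using i by auto
    ultimately show ?thesis unfolding th using cBC cS by simp
  qed
  have ra: "real b = 9/4 * real a" "real c = 7/4 * real a" using rr by simp_all
  have rx: "real x = real a" using xa by simp
  have ap': "real a > 0" using ap by simp
  have "real y \<le> real b" "real z \<le> real c" using yb zc by simp_all
  have yr: "real y \<le> real b" and zr: "real z \<le> real c" using yb zc by simp_all
  show False
  proof (cases "y = 0")
    case True
    have b2: "3 * (real x + real y) < 2 * (real x + real y + real z)" using B2 bp True by simp
    then have "z > 0" using rx ap' True by simp
    note c1 = C1[OF this]
    show ?thesis using b2 c1 rx ra zr True by simp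
  next
    case False
    then have "y > 0" by simp
    note b1 = B1[OF this]
    show ?thesis
    proof (cases "y = b")
      case yb: True
      show ?thesis
      proof (cases "z = c")
        case True
        then show ?thesis using b1 rx ra yb by simp
      next
        case False
        then have "z < c" using zc by simp
        note c2 = C2[OF this]
        then show ?thesis using rx ra yb ap' by simp
      qed
    next
      case False
      then have "y < b" using yb by simp
      note b2 = B2[OF this]
      show ?thesis using b1 b2 by (simp add: algebra_simps)
    qed
  qed
qed

end
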